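(* Let $p(\cdot)\in\mathcal{P}^{\log}(\mathbb{R}^n)$ with $1<p_-\le p_+<\infty$ and $p_\infty=p_-$, and let $\omega$ be a weight such that $\omega(x)\lesssim(1+|x|)^\gamma$ for some $\gamma\in\mathbb{R}$. If $\omega\in RH_{p_+}$, then for every cube $Q$, \[ \|\chi_Q\|_{L^{p(\cdot)}_\omega}\approx\begin{cases}\left[\int_Q\omega(x)^{p_-}dx\right]^{1/p_-}, & \text{if } \ell(Q)>1,\\[1ex] \left[\int_Q\omega(x)^{p_-(Q)}dx\right]^{1/p_-(Q)}, & \text{if } \ell(Q)\le1,\end{cases} \] with implicit constants independent of $Q$.
   Context: $\ell(Q)$ is the side length of $Q$; $p_-(Q)=\operatorname{ess\,inf}_{x\in Q}p(x)$, $p_-=p_-(\mathbb{R}^n)$, $p_+=\operatorname{ess\,sup}p$. $p(\cdot)\in\mathcal{P}^{\log}(\mathbb{R}^n)$ means $0<p_-\le p_+<\infty$ and there are $C,C_\infty>0$ and $p_-\le p_\infty\le p_+$ with $|p(x)-p(y)|\le C/(-\log|x-y|)$ for $|x-y|\le1/2$ and $|p(x)-p_\infty|\le C_\infty/\log(e+|x|)$. A weight is a locally integrable $\omega$ with $0<\omega<\infty$ a.e.; $\|f\|_{L^{p(\cdot)}_\omega}:=\|f\omega\|_{L^{p(\cdot)}}$ with $\|g\|_{L^{p(\cdot)}}=\inf\{\lambda>0:\int|g/\lambda|^{p(x)}dx\le1\}$. $\omega\in RH_s$ ($s>1$) means there is $C>0$ with $\left(\frac1{|Q|}\int_Q\omega^s\right)^{1/s}\le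 C\frac1{|Q|}\int_Q\omega$ for every cube $Q$. *)

theory Defs
  imports "HOL-Analysis.Analysis"
begin

definition cube :: "'a::euclidean_space \<Rightarrow> real \<Rightarrow> 'a set" where
  "cube a l = cbox a (a + l *\<^sub>R One)"

definition ess_inf_on :: "('a::euclidean_space \<Rightarrow> real) \<Rightarrow> 'a set \<Rightarrow> real" where
  "ess_inf_on p E = Sup {c. AE x in lebesgue. x \<in> E \<longrightarrow> c \<le> p x}"

definition p_minus :: "('a::euclidean_space \<Rightarrow> real) \<Rightarrow> real" where
  "p_minus p = ess_inf_on p UNIV"

definition p_plus :: "('a::euclidean_space \<Rightarrow> real) \<Rightarrow> real" where
  "p_plus p = Inf {c. AE x in lebesgue. p x \<le> c}"

definition LH0 :: "('a::euclidean_space \<Rightarrow> real) \<Rightarrow> bool" where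
  "LH0 p \<longleftrightarrow> (\<exists>C>0. \<forall>x y. 0 < norm (x - y) \<and> norm (x - y) \<le> 1/2 \<longrightarrow>
      \<bar>p x - p y\<bar> \<le> C / (- ln (norm (x - y))))"

definition LH_infty :: "('a::euclidean_space \<Rightarrow> real) \<Rightarrow> real \<Rightarrow> bool" where
  "LH_infty p pinf \<longleftrightarrow> (\<exists>C>0. \<forall>x. \<bar>p x - pinf\<bar> \<le> C / ln (exp 1 + norm x))"

definition P_log :: "('a::euclidean_space \<Rightarrow> real) \<Rightarrow> bool" where
  "P_log p \<longleftrightarrow> p \<in> borel_measurable lebesgue \<and> 0 < p_minus p
     \<and> (\<exists>c. AE x in lebesgue. p x \<le> c) \<and> LH0 p
     \<and> (\<exists>pinf. p_minus p \<le> pinf \<and> pinf \<le> p_plus p \<and> LH_infty p pinf)"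

definition weight :: "('a::euclidean_space \<Rightarrow> real) \<Rightarrow> bool" where
  "weight w \<longleftrightarrow> (\<forall>K. compact K \<longrightarrow> set_integrable lebesgue K w) \<and> (AE x in lebesgue. 0 < w x)"

definition RH :: "real \<Rightarrow> ('a::euclidean_space \<Rightarrow> real) \<Rightarrow> bool" where
  "RH s w \<longleftrightarrow> (\<exists>C>0. \<forall>a l. l > 0 \<longrightarrow>
      set_integrable lebesgue (cube a l) (\<lambda>x. w x powr s) \<and>
      ((LINT x:cube a l|lebesgue. w x powr s) / measure lebesgue (cube a l)) powr (1/s)
        \<le> C * ((LINT x:cube a l|lebesgue. w x) / measure lebesgue (cube a l)))"

definition modular :: "('a::euclidean_space \<Rightarrow> real) \<Rightarrow> ('a \<Rightarrow> real) \<Rightarrow> ennreal" where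
  "modular p g = (\<integral>\<^sup>+ x. ennreal (\<bar>g x\<bar> powr p x) \<partial>lebesgue)"

definition var_norm :: "('a::euclidean_space \<Rightarrow> real) \<Rightarrow> ('a \<Rightarrow> real) \<Rightarrow> real" where
  "var_norm p g = Inf {t. t > 0 \<and> modular p (\<lambda>x. g x / t) \<le> 1}"

definition weighted_norm :: "('a::euclidean_space \<Rightarrow> real) \<Rightarrow> ('a \<Rightarrow> real) \<Rightarrow> ('a \<Rightarrow> real) \<Rightarrow> real" where
  "weighted_norm p w f = var_norm p (\<lambda>x. f x * w x)"

end

theory Submission
  imports Defs
begin


lemma split_pow:
  fixes a M p q s :: real
  assumes "0 \<le> a" "0 < M" "q \<le> p" "p \<le> s"
  shows "a powr p \<le> M powr (p - q) * (a powr q + M powr (q - s) * a powr s)"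
proof (cases "a = 0")
  case True then show ?thesis by simp
next
  case False
  hence a: "0 < a" using assms by auto
  show ?thesis
  proof (cases "a \<le> M")
    case True
    have "a powr (p - q) \<le> M powr (p - q)" using True a assms by (intro powr_mono2) auto
    hence "a powr q * a powr (p - q) \<le> a powr q * M powr (p - q)" by (intro mult_left_mono) auto
    hence "a powr p \<le> M powr (p - q) * a powr q" by (simp add: powr_add[symmetric] mult.commute)
    moreover have "0 \<le> M powr (p - q) * (M powr (q - s) * a powr s)" by simp
    ultimately show ?thesis unfolding distrib_left by linarith
  next
    case False
    have "a powr (p - s) \<le> M powr (p - s)" using False a assms
      by (intro powr_mono2') auto
    hence "a powr s * a powr (p - s) \<le> a powr s * M powr (p - s)" by (intro mult_left_mono) auto
    hence "a powr p \<le> M powr (p - s) * a powr s" by (simp add: powr_add[symmetric] mult.commute)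
    also have "M powr (p - s) = M powr (p - q) * M powr (q - s)" by (simp add: powr_add[symmetric])
    finally have "a powr p \<le> M powr (p - q) * (M powr (q - s) * a powr s)" by simp
    moreover have "0 \<le> M powr (p - q) * a powr q" by simp
    ultimately show ?thesis unfolding distrib_left by linarith
  qed
qed

lemma young_el:
  fixes a b p :: real
  assumes "0 \<le> a" "0 < b" "1 < p"
  shows "a * b \<le> a powr p + b powr (p / (p - 1))"
proof (cases "a \<le> b powr (1 / (p - 1))")
  case True
  have "a * b \<le> b powr (1 / (p - 1)) * b" using True assms by (intro mult_right_mono) auto
  also have "\<dots> = b powr (p / (p - 1))"
  proof -
    have "b powr (1 / (p - 1)) * b = b powr (1 / (p - 1) + 1)" using assms by (simp add: powr_add)
    also have "1 / (p - 1) + 1 = p / (p - 1)" using assms by (simp add: field_simps)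
    finally show ?thesis .
  qed
  finally show ?thesis using powr_ge_zero[of a p] by linarith
next
  case False
  hence a: "0 < a" using assms powr_ge_zero[of b "1 / (p - 1)"] by linarith
  have "b = (b powr (1 / (p - 1))) powr (p - 1)" using assms by (simp add: powr_powr)
  also have "\<dots> \<le> a powr (p - 1)" using False assms by (intro powr_mono2) auto
  finally have "a * b \<le> a * a powr (p - 1)" using a by simp
  also have "\<dots> = a powr p"
  proof -
    have "a powr p = a powr (1 + (p - 1))" by simp
    also have "\<dots> = a powr 1 * a powr (p - 1)" by (rule powr_add)
    finally show ?thesis using a by simp
  qed
  finally show ?thesis using powr_ge_zero[of b "p / (p - 1)"] by linarith
qed

lemma mean_el:
  fixes g L r :: real
  assumes "0 \<le> g" "0 < L" "1 \<le> r"
  shows "g \<le> L + L powr (1 - r) * g powr r"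
proof (cases "g \<le> L")
  case True
  have "0 \<le> L powr (1 - r) * g powr r" by simp
  then show ?thesis using True by linarith
next
  case False
  hence g: "0 < g" using assms by auto
  have e1: "g powr r = g * g powr (r - 1)"
  proof -
    have "g powr r = g powr (1 + (r - 1))" by simp
    also have "\<dots> = g powr 1 * g powr (r - 1)" by (rule powr_add)
    finally show ?thesis using g by simp
  qed
  have e2: "L powr (1 - r) = inverse (L powr (r - 1))"
    using powr_minus[of L "r - 1"] by simp
  have e3: "(g / L) powr (r - 1) = g powr (r - 1) / L powr (r - 1)"
    using g assms by (simp add: powr_divide)
  have eq: "L powr (1 - r) * g powr r = g * (g / L) powr (r - 1)"
    unfolding e1 e2 e3 by (simp add: divide_inverse)
  have ge: "1 \<le> (g / L) powr (r - 1)" using False assms by (intro ge_one_powr_ge_zero) auto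
  have "g * 1 \<le> g * (g / L) powr (r - 1)"
    using g ge by (intro mult_left_mono) auto
  then show ?thesis using eq assms by linarith
qed



lemma open_not_null:
  fixes G :: "'a::euclidean_space set"
  assumes "open G" "x \<in> G" "AE y in lebesgue. y \<notin> G"
  shows False
proof -
  obtain a b where ab: "cbox a b \<subseteq> G" "\<forall>i\<in>Basis. a \<bullet> i < b \<bullet> i"
    using open_contains_cbox[OF assms(1,2)] by blast
  have Gs: "G \<in> sets lebesgue" using assms(1) by auto
  have "emeasure lebesgue G = 0" using AE_iff_measurable[OF Gs, of "\<lambda>y. y \<notin> G"] assms(3) by auto
  moreover have "emeasure lebesgue (cbox a b) \<le> emeasure lebesgue G" by (rule emeasure_mono[OF ab(1) Gs])
  ultimately have z: "emeasure lebesgue (cbox a b) = 0" by simp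
  have eq: "emeasure lebesgue (cbox a b) = ennreal (\<Prod>i\<in>Basis. (b - a) \<bullet> i)"
    using ab(2) by (simp add: emeasure_lborel_cbox_eq inner_diff_left less_imp_le)
  have pos: "0 < (\<Prod>i\<in>Basis. (b - a) \<bullet> i)"
    using ab(2) by (intro prod_pos) (auto simp: inner_diff_left)
  have "0 < emeasure lebesgue (cbox a b)" unfolding eq using pos by simp
  thus False using z by simp
qed

lemma LH0_cont:
  fixes p :: "'a::euclidean_space \<Rightarrow> real"
  assumes "LH0 p"
  shows "continuous_on UNIV p"
proof -
  obtain C where C: "C > 0" "\<And>x y. 0 < norm (x - y) \<Longrightarrow> norm (x - y) \<le> 1/2 \<Longrightarrow>
      \<bar>p x - p y\<bar> \<le> C / (- ln (norm (x - y)))"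
    using assms unfolding LH0_def by blast
  show ?thesis unfolding continuous_on_iff
  proof (intro ballI allI impI)
    fix x :: 'a and e :: real
    assume e: "0 < e"
    define d where "d = min (1/2) (exp (- C / e))"
    have d: "0 < d" unfolding d_def by simp
    show "\<exists>d>0. \<forall>x'\<in>UNIV. dist x' x < d \<longrightarrow> dist (p x') (p x) < e"
    proof (intro exI[of _ d] conjI ballI impI d)
      fix x' assume x': "dist x' x < d"
      show "dist (p x') (p x) < e"
      proof (cases "x' = x")
        case True then show ?thesis using e by simp
      next
        case False
        define r where "r = norm (x' - x)"
        have r0: "0 < r" using False unfolding r_def by simp
        have r1: "r \<le> 1/2" "r < exp (- C / e)" using x' unfolding r_def d_def dist_norm by auto
        have "ln r < ln (exp (- C / e))" using r0 r1 by (subst ln_less_cancel_iff) auto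
        hence lr: "C / e < - ln r" by simp
        have pos: "0 < C / e" using C e by simp
        have pp: "0 < (- ln r) * (C / e)" using pos lr by (intro mult_pos_pos) auto
        have "\<bar>p x' - p x\<bar> \<le> C / (- ln r)" using C(2)[of x' x] r0 r1 unfolding r_def by simp
        also have "\<dots> < C / (C / e)" by (rule divide_strict_left_mono[OF lr C(1) pp])
        also have "\<dots> = e" using C e by simp
        finally show ?thesis by (simp add: dist_real_def)
      qed
    qed
  qed
qed

lemma LHinf_bound:
  fixes p :: "'a::euclidean_space \<Rightarrow> real"
  assumes "LH_infty p q"
  obtains C where "C > 0" "\<And>x. \<bar>p x - q\<bar> \<le> C / ln (exp 1 + norm x)" "\<And>x. \<bar>p x - q\<bar> \<le> C"
proof -
  obtain C where C: "C > 0" "\<And>x. \<bar>p x - q\<bar> \<le> C / ln (exp 1 + norm x)"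
    using assms unfolding LH_infty_def by blast
  have "\<bar>p x - q\<bar> \<le> C" for x
  proof -
    have "1 \<le> ln (exp 1 + norm x)" by (subst ln_ge_iff) (auto simp: add_pos_nonneg)
    hence "C / ln (exp 1 + norm x) \<le> C / 1" using C by (intro divide_left_mono) auto
    thus ?thesis using C(2)[of x] by simp
  qed
  thus ?thesis using that C by blast
qed

lemma pminus_le:
  fixes p :: "'a::euclidean_space \<Rightarrow> real"
  assumes cont: "continuous_on UNIV p" and b: "\<And>x. \<bar>p x - q\<bar> \<le> C"
  shows "p_minus p \<le> p x0"
proof -
  let ?S = "{c. AE x in lebesgue. x \<in> UNIV \<longrightarrow> c \<le> p x}"
  have "q - C \<le> p x" for x using b[of x] by (auto simp: abs_le_iff)
  hence "q - C \<in> ?S" by (auto intro!: AE_I2)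
  moreover have "c \<le> p x0" if "c \<in> ?S" for c
  proof (rule ccontr)
    assume "\<not> c \<le> p x0"
    moreover have "open {y. p y < c}" using cont by (intro open_Collect_less) auto
    moreover have "AE y in lebesgue. y \<notin> {y. p y < c}" using that by (auto elim!: AE_mp)
    ultimately show False using open_not_null[of "{y. p y < c}" x0] by auto
  qed
  ultimately have "Sup ?S \<le> p x0" by (intro cSup_least) auto
  thus ?thesis unfolding p_minus_def ess_inf_on_def .
qed

lemma pplus_ge:
  fixes p :: "'a::euclidean_space \<Rightarrow> real"
  assumes cont: "continuous_on UNIV p" and b: "\<And>x. \<bar>p x - q\<bar> \<le> C"
  shows "p x0 \<le> p_plus p"
proof -
  let ?S = "{c. AE x in lebesgue. p x \<le> c}"
  have "p x \<le> q + C" for x using b[of x] by (auto simp: abs_le_iff)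
  hence "q + C \<in> ?S" by (auto intro!: AE_I2)
  moreover have "p x0 \<le> c" if "c \<in> ?S" for c
  proof (rule ccontr)
    assume "\<not> p x0 \<le> c"
    moreover have "open {y. c < p y}" using cont by (intro open_Collect_less) auto
    moreover have "AE y in lebesgue. y \<notin> {y. c < p y}" using that by (auto elim!: AE_mp)
    ultimately show False using open_not_null[of "{y. c < p y}" x0] by auto
  qed
  ultimately have "p x0 \<le> Inf ?S" by (intro cInf_greatest) auto
  thus ?thesis unfolding p_plus_def .
qed

lemma ess_inf_cube:
  fixes p :: "'a::euclidean_space \<Rightarrow> real"
  assumes cont: "continuous_on UNIV p" and l: "0 < l"
  obtains y where "y \<in> cube a l" "ess_inf_on p (cube a l) = p y" "\<And>x. x \<in> cube a l \<Longrightarrow> p y \<le> p x"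
proof -
  let ?Q = "cube a l"
  have bne: "box a (a + l *\<^sub>R One) \<noteq> {}" using l by (auto simp: box_ne_empty inner_add_left)
  have cl: "closure (box a (a + l *\<^sub>R One)) = ?Q" unfolding cube_def using bne by (rule closure_box)
  have "compact ?Q" unfolding cube_def by simp
  have "?Q \<noteq> {}" using bne closure_subset[of "box a (a + l *\<^sub>R One)"] cl by blast
  then obtain y where y: "y \<in> ?Q" "\<And>x. x \<in> ?Q \<Longrightarrow> p y \<le> p x"
    using continuous_attains_inf[of ?Q p] continuous_on_subset[OF cont] \<open>compact ?Q\<close> \<open>?Q \<noteq> {}\<close> by blast
  let ?S = "{c. AE x in lebesgue. x \<in> ?Q \<longrightarrow> c \<le> p x}"
  have "p y \<in> ?S" using y by (auto intro!: AE_I2)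
  moreover have "c \<le> p y" if "c \<in> ?S" for c
  proof (rule ccontr)
    assume "\<not> c \<le> p y"
    moreover have op: "open {z. p z < c}" using cont by (intro open_Collect_less) auto
    ultimately have "y \<in> {z. p z < c} \<inter> closure (box a (a + l *\<^sub>R One))" using y cl by auto
    hence "{z. p z < c} \<inter> closure (box a (a + l *\<^sub>R One)) \<noteq> {}" by blast
    hence "{z. p z < c} \<inter> box a (a + l *\<^sub>R One) \<noteq> {}" using open_Int_closure_eq_empty[OF op] by blast
    then obtain z where z: "z \<in> {z. p z < c} \<inter> box a (a + l *\<^sub>R One)" by blast
    have op2: "open ({z. p z < c} \<inter> box a (a + l *\<^sub>R One))" using op by auto
    have "AE y in lebesgue. y \<notin> {z. p z < c} \<inter> box a (a + l *\<^sub>R One)"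
      using that by (auto elim!: AE_mp simp: cube_def dest: subsetD[OF box_subset_cbox])
    thus False using open_not_null[OF op2 z] by auto
  qed
  ultimately have "Sup ?S = p y" by (intro cSup_eq_maximum) auto
  thus ?thesis using that y unfolding ess_inf_on_def by auto
qed



lemma alg1:
  fixes u V r :: real
  assumes "0 < u" "0 < V" "0 < r"
  shows "(u powr (1/r)) powr (1 - r) * (u * V) = u powr (1/r) * V"
proof -
  have "(u powr (1/r)) powr (1 - r) * u = u powr ((1 - r) / r) * u powr 1"
    using assms by (simp add: powr_powr)
  also have "\<dots> = u powr ((1 - r) / r + 1)" by (simp add: powr_add)
  also have "(1 - r) / r + 1 = 1 / r" using assms by (simp add: field_simps)
  finally show ?thesis by (simp add: mult.assoc[symmetric])
qed

lemma pos_int: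
  fixes f :: "'a::euclidean_space \<Rightarrow> real"
  assumes int: "integrable lebesgue (\<lambda>x. indicator Q x * f x)" and pos: "AE x in lebesgue. 0 < f x"
    and Qs: "Q \<in> sets lebesgue" and Q0: "emeasure lebesgue Q \<noteq> 0"
  shows "0 < integral\<^sup>L lebesgue (\<lambda>x. indicator Q x * f x)"
proof -
  have nn: "AE x in lebesgue. 0 \<le> indicator Q x * f x" using pos
    by eventually_elim (auto simp: indicator_def)
  have ge: "0 \<le> integral\<^sup>L lebesgue (\<lambda>x. indicator Q x * f x)" by (rule integral_nonneg_AE[OF nn])
  have False if z: "integral\<^sup>L lebesgue (\<lambda>x. indicator Q x * f x) = 0"
  proof -
    have "AE x in lebesgue. indicator Q x * f x = 0"
      using integral_nonneg_eq_0_iff_AE[OF int nn] z by simp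
    hence "AE x in lebesgue. x \<notin> Q" using pos
      by eventually_elim (auto simp: indicator_def split: if_splits)
    hence "emeasure lebesgue Q = 0" using AE_iff_measurable[OF Qs, of "\<lambda>x. x \<notin> Q"] by auto
    with Q0 show False by simp
  qed
  thus ?thesis using ge by fastforce
qed

lemma pm2:
  fixes g :: "'a::euclidean_space \<Rightarrow> real"
  assumes ig: "integrable lebesgue (\<lambda>x. indicator Q x * g x)"
    and igr: "integrable lebesgue (\<lambda>x. indicator Q x * g x powr r)"
    and g0: "AE x in lebesgue. 0 \<le> g x" and r: "1 \<le> r" and V: "0 < measure lebesgue Q"
    and Qs: "Q \<in> sets lebesgue" and fin: "emeasure lebesgue Q < \<infinity>"
    and X: "0 < integral\<^sup>L lebesgue (\<lambda>x. indicator Q x * g x powr r)"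
  shows "integral\<^sup>L lebesgue (\<lambda>x. indicator Q x * g x) \<le> 2 * measure lebesgue Q *
    (integral\<^sup>L lebesgue (\<lambda>x. indicator Q x * g x powr r) / measure lebesgue Q) powr (1/r)"
proof -
  define V where "V = measure lebesgue Q"
  define X where "X = integral\<^sup>L lebesgue (\<lambda>x. indicator Q x * g x powr r)"
  define L where "L = (X / V) powr (1/r)"
  have V0: "0 < V" and X0: "0 < X" using V X unfolding V_def X_def by auto
  have L: "0 < L" using V0 X0 unfolding L_def by simp
  have iind: "integrable lebesgue (indicator Q :: 'a \<Rightarrow> real)"
    using Qs fin by (simp add: integrable_real_indicator)
  have i2: "integrable lebesgue (\<lambda>x. indicator Q x * L + L powr (1 - r) * (indicator Q x * g x powr r))"
    by (rule Bochner_Integration.integrable_add[OF integrable_mult_left[OF iind] integrable_mult_right[OF igr]])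
  have "integral\<^sup>L lebesgue (\<lambda>x. indicator Q x * g x) \<le>
      integral\<^sup>L lebesgue (\<lambda>x. indicator Q x * L + L powr (1 - r) * (indicator Q x * g x powr r))"
  proof (rule integral_mono_AE[OF ig i2])
    show "AE x in lebesgue. indicator Q x * g x \<le> indicator Q x * L + L powr (1 - r) * (indicator Q x * g x powr r)"
      using g0
    proof eventually_elim
      case (elim x)
      show ?case using mean_el[OF elim L r] by (auto simp: indicator_def)
    qed
  qed
  also have "\<dots> = (LINT x|lebesgue. indicator Q x * L) + (LINT x|lebesgue. L powr (1 - r) * (indicator Q x * g x powr r))"
    by (rule Bochner_Integration.integral_add[OF integrable_mult_left[OF iind] integrable_mult_right[OF igr]])
  also have "\<dots> = L * V + L powr (1 - r) * X"
    using Qs fin unfolding V_def X_def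
    by (simp add: integral_mult_left_zero integral_mult_right_zero integral_indicator mult.commute)
  also have "L powr (1 - r) * X = L * V"
  proof -
    have "X = (X / V) * V" using V0 by simp
    hence "L powr (1 - r) * X = ((X / V) powr (1/r)) powr (1 - r) * ((X / V) * V)" unfolding L_def by simp
    also have "\<dots> = L * V" unfolding L_def using V0 X0 r by (intro alg1) auto
    finally show ?thesis .
  qed
  finally show ?thesis unfolding L_def V_def X_def by simp
qed



lemma alg_low:
  fixes V I1 Iq Is CR q s :: real
  assumes V: "0 < V" and I1: "0 < I1" and Iq: "0 < Iq" and Is: "0 < Is" and CR: "0 < CR"
    and q: "1 < q" "q \<le> s"
    and F2: "Iq \<le> 2 * V * (Is / V) powr (1 / (s / q))"
    and RH: "(Is / V) powr (1 / s) \<le> CR * (I1 / V)"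
  shows "Iq powr (1 / q) \<le> 2 * CR * (V powr (- (q - 1) / q) * I1)"
proof -
  have s: "0 < s" using q by simp
  have a: "(Is / V) powr (1 / (s / q)) = ((Is / V) powr (1 / s)) powr q"
    by (simp add: powr_powr)
  have b: "((Is / V) powr (1 / s)) powr q \<le> (CR * (I1 / V)) powr q"
    using RH q by (intro powr_mono2) auto
  have c: "Iq \<le> 2 * V * (CR * (I1 / V)) powr q"
    using F2 a b V by (smt (verit) mult_left_mono)
  have "Iq powr (1 / q) \<le> (2 * V * (CR * (I1 / V)) powr q) powr (1 / q)"
    using c Iq q by (intro powr_mono2) auto
  also have "\<dots> = 2 powr (1 / q) * V powr (1 / q) * (CR * (I1 / V))"
    using V I1 CR q by (simp add: powr_mult powr_powr)
  also have "\<dots> \<le> 2 * V powr (1 / q) * (CR * (I1 / V))"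
  proof -
    have "2 powr (1 / q) \<le> 2 powr 1" using q by (intro powr_mono) auto
    thus ?thesis using V I1 CR by (intro mult_right_mono) auto
  qed
  also have "2 * V powr (1 / q) * (CR * (I1 / V)) = 2 * CR * (V powr (- (q - 1) / q) * I1)"
  proof -
    have "V powr (1 / q) / V = V powr (1 / q) / V powr 1" using V by simp
    also have "\<dots> = V powr (1 / q - 1)" by (simp add: powr_diff)
    also have "1 / q - 1 = - (q - 1) / q" using q by (simp add: field_simps)
    finally have "V powr (1 / q) / V = V powr (- (q - 1) / q)" .
    moreover have "2 * V powr (1 / q) * (CR * (I1 / V)) = 2 * CR * ((V powr (1 / q) / V) * I1)" by simp
    ultimately show ?thesis by simp
  qed
  finally show ?thesis .
qed

lemma alg_up:
  fixes V I1 Iq Is CR q s :: real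
  assumes V: "0 < V" and I1: "0 < I1" and Iq: "0 < Iq" and Is: "0 < Is" and CR: "0 < CR"
    and q: "1 < q" "q \<le> s"
    and F1: "I1 \<le> 2 * V * (Iq / V) powr (1 / q)"
    and RH: "(Is / V) powr (1 / s) \<le> CR * (I1 / V)"
  shows "Is \<le> V * (2 * CR) powr s * (Iq / V) powr (s / q)"
proof -
  have s: "0 < s" using q by simp
  have "Is / V = ((Is / V) powr (1 / s)) powr s" using Is V s by (simp add: powr_powr)
  also have "\<dots> \<le> (CR * (I1 / V)) powr s" using RH s by (intro powr_mono2) auto
  also have "\<dots> \<le> (CR * (2 * (Iq / V) powr (1 / q))) powr s"
  proof -
    have "I1 / V \<le> 2 * (Iq / V) powr (1 / q)" using F1 V by (simp add: field_simps)
    thus ?thesis using CR I1 V s by (intro powr_mono2 mult_left_mono) auto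
  qed
  also have "\<dots> = (2 * CR) powr s * (Iq / V) powr (s / q)"
    using CR Iq V by (simp add: powr_mult powr_powr mult.commute mult.left_commute)
  finally show ?thesis using V by (simp add: field_simps)
qed

lemma alg_fin_up:
  fixes V Iq Is CR q s B k :: real
  assumes V: "0 < V" and Iq: "0 < Iq" and Is: "0 < Is" and CR: "0 < CR"
    and q: "1 < q" "q \<le> s" and B: "0 \<le> B"
    and hIs: "Is \<le> V * (2 * CR) powr s * (Iq / V) powr (s / q)"
    and k: "k = max 1 (B * (1 + (2 * CR) powr s))"
  shows "B / (k * Iq powr (1 / q)) powr q * Iq
      + B * V powr ((s - q) / q) / (k * Iq powr (1 / q)) powr s * Is \<le> 1"
proof -
  have s: "0 < s" using q by simp
  have k1: "1 \<le> k" using k by simp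
  have k0: "0 < k" using k1 by simp
  have tq: "(k * Iq powr (1 / q)) powr q = k powr q * Iq"
    using k0 Iq q by (simp add: powr_mult powr_powr)
  have ts: "(k * Iq powr (1 / q)) powr s = k powr s * Iq powr (s / q)"
    using k0 Iq q by (simp add: powr_mult powr_powr)
  have kq: "k \<le> k powr q" using powr_mono[of 1 q k] k1 q by simp
  have ks: "k \<le> k powr s" using powr_mono[of 1 s k] k1 q by simp
  have t1: "B / (k * Iq powr (1 / q)) powr q * Iq = B / k powr q"
    unfolding tq using Iq by simp
  have t1': "B / k powr q \<le> B / k" using kq k0 B by (intro divide_left_mono) auto
  have "B * V powr ((s - q) / q) / (k * Iq powr (1 / q)) powr s * Is
      \<le> B * V powr ((s - q) / q) / (k * Iq powr (1 / q)) powr s * (V * (2 * CR) powr s * (Iq / V) powr (s / q))"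
    using hIs B by (intro mult_left_mono) auto
  also have "\<dots> = B * (2 * CR) powr s / k powr s * ((V powr ((s - q) / q) * V) / V powr (s / q))"
    unfolding ts using Iq V k0 by (simp add: powr_divide field_simps)
  also have "V powr ((s - q) / q) * V = V powr (s / q)"
  proof -
    have "V powr ((s - q) / q) * V = V powr ((s - q) / q) * V powr 1" using V by simp
    also have "\<dots> = V powr ((s - q) / q + 1)" by (simp add: powr_add)
    also have "(s - q) / q + 1 = s / q" using q by (simp add: field_simps)
    finally show ?thesis .
  qed
  also have "B * (2 * CR) powr s / k powr s * (V powr (s / q) / V powr (s / q)) = B * (2 * CR) powr s / k powr s"
    using V by simp
  also have "\<dots> \<le> B * (2 * CR) powr s / k" using ks k0 B by (intro divide_left_mono) auto
  finally have t2: "B * V powr ((s - q) / q) / (k * Iq powr (1 / q)) powr s * Is \<le> B * (2 * CR) powr s / k" .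
  have "B / k + B * (2 * CR) powr s / k = B * (1 + (2 * CR) powr s) / k" by (simp add: distrib_left add_divide_distrib)
  also have "\<dots> \<le> 1" using k k0 by (simp add: field_simps)
  finally show ?thesis using t1 t1' t2 by linarith
qed



lemma pw_le:
  fixes w q s :: real
  assumes "0 < w" "1 \<le> q" "q \<le> s"
  shows "w powr q \<le> w + w powr s"
proof (cases "w \<le> 1")
  case True
  have "w powr q \<le> w powr 1" using True assms by (intro powr_mono') auto
  moreover have "w powr 1 = w" using assms by simp
  ultimately show ?thesis using assms powr_ge_zero[of w s] by linarith
next
  case False
  have "w powr q \<le> w powr s" using False assms by (intro powr_mono) auto
  thus ?thesis using assms by simp
qed

lemma ind_powr: "indicator Q x * (w x :: real) powr r = (indicator Q x * w x) powr r"
  by (simp add: indicator_def)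

lemma meas_h1:
  assumes [measurable]: "f \<in> borel_measurable M" "p \<in> borel_measurable M"
  shows "(\<lambda>x. ennreal (\<bar>f x :: real\<bar> powr p x)) \<in> borel_measurable M"
  by measurable

lemma meas_h2:
  assumes [measurable]: "Q \<in> sets M" "p \<in> borel_measurable M"
  shows "(\<lambda>x. ennreal (indicator Q x * (b::real) powr (p x / (p x - 1)))) \<in> borel_measurable M"
  by measurable

lemma cube_est:
  fixes p w :: "'a::euclidean_space \<Rightarrow> real" and Q :: "'a set"
  assumes pm: "p \<in> borel_measurable lebesgue"
    and Qs: "Q \<in> sets lebesgue" and fin: "emeasure lebesgue Q < \<infinity>" and V0: "0 < measure lebesgue Q"
    and iw: "integrable lebesgue (\<lambda>x. indicator Q x * w x)"
    and iws: "integrable lebesgue (\<lambda>x. indicator Q x * w x powr s)"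
    and wpos: "AE x in lebesgue. 0 < w x"
    and RHQ: "((LINT x|lebesgue. indicator Q x * w x powr s) / measure lebesgue Q) powr (1/s)
              \<le> CR * ((LINT x|lebesgue. indicator Q x * w x) / measure lebesgue Q)"
    and CR: "0 < CR"
    and q: "1 < q" "q \<le> s"
    and pQ: "\<And>x. x \<in> Q \<Longrightarrow> q \<le> p x \<and> p x \<le> s"
    and hB: "\<And>x. x \<in> Q \<Longrightarrow> measure lebesgue Q powr (- (p x - q) / q) \<le> B"
    and hD: "(\<integral>\<^sup>+x. ennreal (indicator Q x * (measure lebesgue Q powr (- (q - 1) / q)) powr (p x / (p x - 1))) \<partial>lebesgue) \<le> ennreal D"
    and D0: "0 \<le> D"
  shows "1 / (2 * CR * (1 + D)) * (LINT x|lebesgue. indicator Q x * w x powr q) powr (1/q) \<le> weighted_norm p w (indicator Q)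
    \<and> weighted_norm p w (indicator Q) \<le> max 1 (B * (1 + (2 * CR) powr s)) * (LINT x|lebesgue. indicator Q x * w x powr q) powr (1/q)"
proof -
  define V where "V = measure lebesgue Q"
  define I1 where "I1 = (LINT x|lebesgue. indicator Q x * w x)"
  define Iq where "Iq = (LINT x|lebesgue. indicator Q x * w x powr q)"
  define Is where "Is = (LINT x|lebesgue. indicator Q x * w x powr s)"
  define E where "E = Iq powr (1/q)"
  define k where "k = max 1 (B * (1 + (2 * CR) powr s))"
  define \<beta> where "\<beta> = V powr (- (q - 1) / q)"
  have s0: "0 < s" using q by simp
  have V: "0 < V" using V0 unfolding V_def .
  have emQ: "emeasure lebesgue Q = ennreal V" unfolding V_def using fin
    by (intro emeasure_eq_ennreal_measure) auto
  have emQ0: "emeasure lebesgue Q \<noteq> 0" using emQ V by simp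
  have wm: "(\<lambda>x. indicator Q x * w x) \<in> borel_measurable lebesgue"
    using iw by (rule borel_measurable_integrable)
  have wpm: "(\<lambda>x. indicator Q x * w x powr r) \<in> borel_measurable lebesgue" for r
    unfolding ind_powr using wm by measurable
  have iwq: "integrable lebesgue (\<lambda>x. indicator Q x * w x powr q)"
  proof (rule Bochner_Integration.integrable_bound[OF Bochner_Integration.integrable_add[OF iw iws] wpm])
    show "AE x in lebesgue. norm (indicator Q x * w x powr q) \<le> norm (indicator Q x * w x + indicator Q x * w x powr s)"
      using wpos
    proof eventually_elim
      case (elim x)
      show ?case using pw_le[OF elim, of q s] q by (auto simp: indicator_def)
    qed
  qed
  have wpos_r: "AE x in lebesgue. 0 < w x powr r" for r using wpos by eventually_elim simp
  have I1: "0 < I1" unfolding I1_def by (rule pos_int[OF iw wpos Qs emQ0])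
  have Iq: "0 < Iq" unfolding Iq_def by (rule pos_int[OF iwq wpos_r Qs emQ0])
  have Is: "0 < Is" unfolding Is_def by (rule pos_int[OF iws wpos_r Qs emQ0])
  have w0: "AE x in lebesgue. 0 \<le> w x" using wpos by eventually_elim simp
  have F1: "I1 \<le> 2 * V * (Iq / V) powr (1 / q)"
    unfolding I1_def Iq_def V_def
    by (rule pm2[OF iw iwq w0 _ V0 Qs fin]) (use q Iq Iq_def in auto)
  have F2: "Iq \<le> 2 * V * (Is / V) powr (1 / (s / q))"
  proof -
    have eq: "(\<lambda>x. indicator Q x * (w x powr q) powr (s / q)) = (\<lambda>x. indicator Q x * w x powr s)"
      using q by (simp add: powr_powr)
    have w0': "AE x in lebesgue. 0 \<le> w x powr q" by simp
    show ?thesis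
      unfolding Iq_def Is_def V_def
      using pm2[OF iwq _ w0' _ V0 Qs fin, of "s / q"] eq iws Is q unfolding Is_def by simp
  qed
  have RH': "(Is / V) powr (1 / s) \<le> CR * (I1 / V)" using RHQ unfolding Is_def I1_def V_def .
  have low: "E \<le> 2 * CR * (\<beta> * I1)"
    unfolding E_def \<beta>_def by (rule alg_low[OF V I1 Iq Is CR q F2 RH'])
  have up: "Is \<le> V * (2 * CR) powr s * (Iq / V) powr (s / q)"
    by (rule alg_up[OF V I1 Iq Is CR q F1 RH'])
  have E0: "0 < E" unfolding E_def using Iq by simp
  have k1: "1 \<le> k" unfolding k_def by simp
  have Qne: "Q \<noteq> {}" using V unfolding V_def by auto
  have B0: "0 \<le> B" using Qne hB by (meson ex_in_conv order_trans powr_ge_zero)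
  have \<beta>0: "0 < \<beta>" unfolding \<beta>_def using V by simp
  define S where "S = {t. 0 < t \<and> modular p (\<lambda>x. indicator Q x * w x / t) \<le> 1}"
  have wn: "weighted_norm p w (indicator Q) = Inf S"
    unfolding weighted_norm_def var_norm_def S_def ..
  have inS: "k * E \<in> S"
  proof -
    define t where "t = k * E"
    have t0: "0 < t" unfolding t_def using k1 E0 by simp
    define c1 where "c1 = B / t powr q"
    define c2 where "c2 = B * V powr ((s - q) / q) / t powr s"
    have int2: "integrable lebesgue (\<lambda>x. c1 * (indicator Q x * w x powr q) + c2 * (indicator Q x * w x powr s))"
      by (rule Bochner_Integration.integrable_add[OF integrable_mult_right[OF iwq] integrable_mult_right[OF iws]])
    have "modular p (\<lambda>x. indicator Q x * w x / t)
        \<le> (\<integral>\<^sup>+x. ennreal (c1 * (indicator Q x * w x powr q) + c2 * (indicator Q x * w x powr s)) \<partial>lebesgue)"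
      unfolding modular_def
    proof (rule nn_integral_mono_AE)
      show "AE x in lebesgue. ennreal (\<bar>indicator Q x * w x / t\<bar> powr p x)
          \<le> ennreal (c1 * (indicator Q x * w x powr q) + c2 * (indicator Q x * w x powr s))"
        using wpos
      proof eventually_elim
        case (elim x)
        show ?case
        proof (cases "x \<in> Q")
          case False
          thus ?thesis by simp
        next
          case True
          have pq: "q \<le> p x" "p x \<le> s" using pQ[OF True] by auto
          define M where "M = V powr (- 1 / q)"
          have M0: "0 < M" unfolding M_def using V by simp
          have a0: "0 \<le> w x / t" using elim t0 by simp
          have "(w x / t) powr p x \<le> M powr (p x - q) * ((w x / t) powr q + M powr (q - s) * (w x / t) powr s)"
            by (rule split_pow[OF a0 M0 pq])
          also have "M powr (p x - q) = V powr (- (p x - q) / q)"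
            unfolding M_def powr_powr by (rule arg_cong[where f="(powr) V"]) (use q in \<open>simp add: field_simps\<close>)
          also have "M powr (q - s) = V powr ((s - q) / q)"
            unfolding M_def powr_powr by (rule arg_cong[where f="(powr) V"]) (use q in \<open>simp add: field_simps\<close>)
          also have "V powr (- (p x - q) / q) \<le> B" using hB[OF True] unfolding V_def .
          finally have "(w x / t) powr p x \<le> B * ((w x / t) powr q + V powr ((s - q) / q) * (w x / t) powr s)"
            by (simp add: mult_right_mono)
          also have "\<dots> = c1 * w x powr q + c2 * w x powr s"
            unfolding c1_def c2_def using elim t0 by (simp add: powr_divide field_simps)
          finally have "(w x / t) powr p x \<le> c1 * w x powr q + c2 * w x powr s" .
          thus ?thesis using True elim t0 by (simp add: ennreal_leI)
        qed
      qed
    qed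
    also have "\<dots> = ennreal (LINT x|lebesgue. c1 * (indicator Q x * w x powr q) + c2 * (indicator Q x * w x powr s))"
    proof (rule nn_integral_eq_integral[OF int2])
      show "AE x in lebesgue. 0 \<le> c1 * (indicator Q x * w x powr q) + c2 * (indicator Q x * w x powr s)"
        unfolding c1_def c2_def using B0 by (intro AE_I2) simp
    qed
    also have "(LINT x|lebesgue. c1 * (indicator Q x * w x powr q) + c2 * (indicator Q x * w x powr s)) = c1 * Iq + c2 * Is"
      unfolding Iq_def Is_def
      by (subst Bochner_Integration.integral_add[OF integrable_mult_right[OF iwq] integrable_mult_right[OF iws]]) simp
    also have "ennreal (c1 * Iq + c2 * Is) \<le> 1"
    proof -
      have "c1 * Iq + c2 * Is \<le> 1"
        unfolding c1_def c2_def t_def E_def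
        using alg_fin_up[OF V Iq Is CR q B0 up k_def] by (simp add: mult.commute mult.left_commute)
      thus ?thesis using ennreal_leI[of "c1 * Iq + c2 * Is" 1] by simp
    qed
    finally show ?thesis unfolding S_def t_def[symmetric] using t0 by simp
  qed
  have bdd: "bdd_below S" unfolding S_def by (rule bdd_belowI[of _ 0]) auto
  have upper: "Inf S \<le> k * E" by (rule cInf_lower[OF inS bdd])
  have lowt: "E / (2 * CR * (1 + D)) \<le> t" if tS: "t \<in> S" for t
  proof -
    have t0: "0 < t" and mod1: "modular p (\<lambda>x. indicator Q x * w x / t) \<le> 1" using tS unfolding S_def by auto
    have intL: "integrable lebesgue (\<lambda>x. indicator Q x * w x * (\<beta> / t))"
      by (rule integrable_mult_left[OF iw])
    have "ennreal (I1 * (\<beta> / t)) = (\<integral>\<^sup>+x. ennreal (indicator Q x * w x * (\<beta> / t)) \<partial>lebesgue)"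
    proof -
      have "(\<integral>\<^sup>+x. ennreal (indicator Q x * w x * (\<beta> / t)) \<partial>lebesgue)
          = ennreal (LINT x|lebesgue. indicator Q x * w x * (\<beta> / t))"
      proof (rule nn_integral_eq_integral[OF intL])
        show "AE x in lebesgue. 0 \<le> indicator Q x * w x * (\<beta> / t)"
          using w0 by eventually_elim (use \<beta>0 t0 in \<open>simp add: indicator_def\<close>)
      qed
      thus ?thesis unfolding I1_def by simp
    qed
    also have "\<dots> \<le> (\<integral>\<^sup>+x. ennreal (\<bar>indicator Q x * w x / t\<bar> powr p x)
        + ennreal (indicator Q x * \<beta> powr (p x / (p x - 1))) \<partial>lebesgue)"
    proof (rule nn_integral_mono_AE)
      show "AE x in lebesgue. ennreal (indicator Q x * w x * (\<beta> / t)) \<le> ennreal (\<bar>indicator Q x * w x / t\<bar> powr p x)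
        + ennreal (indicator Q x * \<beta> powr (p x / (p x - 1)))"
        using wpos
      proof eventually_elim
        case (elim x)
        show ?case
        proof (cases "x \<in> Q")
          case False thus ?thesis by simp
        next
          case True
          have p1: "1 < p x" using pQ[OF True] q by auto
          have "w x / t * \<beta> \<le> (w x / t) powr p x + \<beta> powr (p x / (p x - 1))"
            by (rule young_el) (use elim t0 \<beta>0 p1 in auto)
          hence "ennreal (w x * (\<beta> / t)) \<le> ennreal ((w x / t) powr p x + \<beta> powr (p x / (p x - 1)))"
            by (intro ennreal_leI) (simp add: field_simps)
          thus ?thesis using True elim t0 by (simp add: ennreal_plus)
        qed
      qed
    qed
    also have "\<dots> = modular p (\<lambda>x. indicator Q x * w x / t)
        + (\<integral>\<^sup>+x. ennreal (indicator Q x * \<beta> powr (p x / (p x - 1))) \<partial>lebesgue)"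
      unfolding modular_def
      by (intro nn_integral_add meas_h1[OF borel_measurable_divide[OF wm borel_measurable_const] pm] meas_h2[OF Qs pm])
    also have "\<dots> \<le> 1 + ennreal D"
      using mod1 hD unfolding \<beta>_def V_def by (intro add_mono) auto
    finally have X: "ennreal (I1 * (\<beta> / t)) \<le> 1 + ennreal D" .
    have "ennreal (1 + D) = 1 + ennreal D" using ennreal_plus[of 1 D] D0 by simp
    hence "ennreal (I1 * (\<beta> / t)) \<le> ennreal (1 + D)" using X by simp
    hence "I1 * (\<beta> / t) \<le> 1 + D" using D0 by (subst (asm) ennreal_le_iff) auto
    hence "\<beta> * I1 \<le> (1 + D) * t" using t0 by (simp add: field_simps)
    hence "E \<le> 2 * CR * ((1 + D) * t)" using low CR by (smt (verit) mult_left_mono)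
    hence "E \<le> t * (2 * CR * (1 + D))" by (simp add: algebra_simps)
    moreover have "0 < 2 * CR * (1 + D)" using CR D0 by simp
    ultimately show ?thesis by (simp add: pos_divide_le_eq)
  qed
  have Sne: "S \<noteq> {}" using inS by auto
  have lower: "E / (2 * CR * (1 + D)) \<le> Inf S" by (rule cInf_greatest[OF Sne lowt])
  show ?thesis using upper lower unfolding wn E_def Iq_def k_def by simp
qed



lemma big_pt:
  fixes \<beta> px q s lx Ci n :: real
  assumes b: "0 < \<beta>" "\<beta> \<le> 1" and q: "1 < q" "q \<le> px" "px \<le> s"
    and lx: "0 < lx" and pl: "(px - q) * lx \<le> Ci" and n: "0 < n"
  shows "\<beta> powr (px / (px - 1)) \<le> exp (n / (s / (s - 1)) * Ci / (q - 1)^2) * \<beta> powr (q / (q - 1))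
     + (if n / (s / (s - 1)) * lx < - ln \<beta> then \<beta> powr (s / (s - 1)) else 0)"
proof -
  define Lb where "Lb = - ln \<beta>"
  have Lb0: "0 \<le> Lb" unfolding Lb_def using b by simp
  define s' where "s' = s / (s - 1)"
  define q' where "q' = q / (q - 1)"
  define p' where "p' = px / (px - 1)"
  have s'0: "0 < s'" unfolding s'_def using q by simp
  have pw: "\<beta> powr e = exp (- e * Lb)" for e unfolding Lb_def powr_def using b by simp
  have qp: "q' - p' = (px - q) / ((q - 1) * (px - 1))"
    unfolding q'_def p'_def using q by (simp add: field_simps)
  have qp0: "0 \<le> q' - p'" unfolding qp using q by simp
  have qp1: "(q' - p') * lx \<le> Ci / (q - 1)^2"
  proof -
    have "(q' - p') * lx = ((px - q) * lx) / ((q - 1) * (px - 1))" unfolding qp by simp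
    also have "\<dots> \<le> Ci / ((q - 1) * (px - 1))" using pl q by (intro divide_right_mono) auto
    also have "\<dots> \<le> Ci / ((q - 1) * (q - 1))"
    proof (rule divide_left_mono)
      show "0 \<le> Ci" using pl lx q by (smt (verit) mult_nonneg_nonneg)
      show "(q - 1) * (q - 1) \<le> (q - 1) * (px - 1)" using q by (intro mult_left_mono) auto
      show "0 < (q - 1) * (px - 1) * ((q - 1) * (q - 1))" using q by simp
    qed
    finally show ?thesis by (simp add: power2_eq_square)
  qed
  show ?thesis
  proof (cases "n / s' * lx < Lb")
    case False
    have "(q' - p') * Lb \<le> (q' - p') * (n / s' * lx)" using False qp0 by (intro mult_left_mono) auto
    also have "\<dots> = n / s' * ((q' - p') * lx)" by simp
    also have "\<dots> \<le> n / s' * (Ci / (q - 1)^2)" using qp1 n s'0 by (intro mult_left_mono) auto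
    finally have e1: "(q' - p') * Lb \<le> n / s' * Ci / (q - 1)^2" by simp
    have "\<beta> powr p' = exp ((q' - p') * Lb) * \<beta> powr q'"
      unfolding pw by (simp add: exp_add[symmetric] algebra_simps)
    also have "\<dots> \<le> exp (n / s' * Ci / (q - 1)^2) * \<beta> powr q'"
      using e1 by (intro mult_right_mono) auto
    finally show ?thesis using False unfolding s'_def q'_def p'_def Lb_def by simp
  next
    case True
    have "s' \<le> p'" unfolding s'_def p'_def using q by (simp add: field_simps)
    hence "\<beta> powr p' \<le> \<beta> powr s'" using b by (intro powr_mono') auto
    moreover have "0 \<le> exp (n / s' * Ci / (q - 1)^2) * \<beta> powr q'" by simp
    ultimately have "\<beta> powr p' \<le> exp (n / s' * Ci / (q - 1)^2) * \<beta> powr q' + \<beta> powr s'" by linarith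
    thus ?thesis using True unfolding s'_def q'_def p'_def Lb_def by simp
  qed
qed

lemma small_H:
  fixes l d nn dp C0 Ci :: real
  assumes l: "0 < l" "l \<le> 1" and d: "0 \<le> d" "d \<le> nn * l" and nn: "1 \<le> nn"
    and dp: "0 \<le> dp" "dp \<le> 2 * Ci" and C0: "0 < C0"
    and lh: "0 < d \<Longrightarrow> d \<le> 1/2 \<Longrightarrow> dp \<le> C0 / (- ln d)"
    and d0: "d = 0 \<Longrightarrow> dp = 0"
  shows "dp * (- ln l) \<le> C0 + 2 * Ci * ln (2 * nn)"
proof -
  have ll: "0 \<le> - ln l" using l by simp
  have Ci: "0 \<le> Ci" using dp by simp
  have ln2n: "0 \<le> ln (2 * nn)" using nn by simp
  have extra: "0 \<le> 2 * Ci * ln (2 * nn)" using Ci ln2n by simp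
  show ?thesis
  proof (cases "d = 0")
    case True thus ?thesis using d0 C0 extra by simp
  next
    case False
    hence d0': "0 < d" using d by simp
    show ?thesis
    proof (cases "d \<le> 1/2")
      case True
      have lnd: "0 < - ln d" using True d0' by (simp add: ln_less_zero)
      have "ln d \<le> ln (nn * l)" using d d0' by (subst ln_le_cancel_iff) auto
      also have "\<dots> = ln nn + ln l" using nn l by (simp add: ln_mult)
      finally have "- ln l \<le> - ln d + ln nn" by simp
      hence "dp * (- ln l) \<le> dp * (- ln d + ln nn)" using dp by (intro mult_left_mono) auto
      also have "\<dots> = dp * (- ln d) + dp * ln nn" by (simp add: algebra_simps)
      also have "dp * (- ln d) \<le> C0"
      proof -
        have "dp * (- ln d) \<le> C0 / (- ln d) * (- ln d)" using lh[OF d0' True] lnd by (intro mult_right_mono) auto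
        also have "\<dots> = C0" using lnd by simp
        finally show ?thesis .
      qed
      also have "dp * ln nn \<le> 2 * Ci * ln (2 * nn)"
        using dp nn by (intro mult_mono) auto
      finally show ?thesis by simp
    next
      case False
      hence "1 / (2 * nn) < l" using d nn by (simp add: field_simps)
      hence "ln (1 / (2 * nn)) < ln l" using nn l by (subst ln_less_cancel_iff) auto
      hence "- ln l < ln (2 * nn)" using nn by (simp add: ln_div)
      hence "dp * (- ln l) \<le> 2 * Ci * ln (2 * nn)" using dp ll by (intro mult_mono) auto
      thus ?thesis using C0 by simp
    qed
  qed
qed



lemma cube_facts:
  fixes a :: "'a::euclidean_space"
  assumes l: "0 < l"
  shows "cube a l \<in> sets lebesgue" "emeasure lebesgue (cube a l) = ennreal (l ^ DIM('a))"
    "emeasure lebesgue (cube a l) < \<infinity>" "measure lebesgue (cube a l) = l ^ DIM('a)"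
    "compact (cube a l)"
proof -
  show "cube a l \<in> sets lebesgue" unfolding cube_def by simp
  have "emeasure lebesgue (cube a l) = ennreal (\<Prod>b\<in>(Basis::'a set). l)"
    unfolding cube_def using l by (simp add: emeasure_lborel_cbox_eq inner_add_left)
  thus e: "emeasure lebesgue (cube a l) = ennreal (l ^ DIM('a))" by simp
  thus "emeasure lebesgue (cube a l) < \<infinity>" by simp
  show "measure lebesgue (cube a l) = l ^ DIM('a)" using e l unfolding measure_def by simp
  show "compact (cube a l)" unfolding cube_def by simp
qed

lemma cube_diam:
  fixes a :: "'a::euclidean_space"
  assumes "x \<in> cube a l" "y \<in> cube a l"
  shows "norm (x - y) \<le> real DIM('a) * l"
proof -
  have "\<bar>(x - y) \<bullet> b\<bar> \<le> l" if b: "b \<in> Basis" for b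
    using assms b unfolding cube_def mem_box by (auto simp: inner_diff_left inner_add_left abs_le_iff) (smt (verit, best))+
  hence "(\<Sum>b\<in>Basis. \<bar>(x - y) \<bullet> b\<bar>) \<le> real DIM('a) * l"
    using sum_bounded_above[of Basis "\<lambda>b. \<bar>(x - y) \<bullet> b\<bar>" l] by simp
  thus ?thesis using norm_le_l1[of "x - y"] by linarith
qed

lemma sym_box_measure:
  assumes r: "0 < r"
  shows "emeasure lebesgue (cbox (- r *\<^sub>R One) (r *\<^sub>R One :: 'a::euclidean_space)) = ennreal ((2 * r) ^ DIM('a))"
proof -
  have "emeasure lebesgue (cbox (- r *\<^sub>R One) (r *\<^sub>R One :: 'a)) = ennreal (\<Prod>b\<in>(Basis::'a set). 2 * r)"
    using r by (simp add: emeasure_lborel_cbox_eq inner_diff_left algebra_simps)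
  thus ?thesis by simp
qed

theorem lemma3p6:
  fixes p w :: "'a::euclidean_space \<Rightarrow> real"
  assumes "P_log p"
    and "1 < p_minus p"
    and "LH_infty p (p_minus p)"
    and "weight w"
    and "\<exists>C \<gamma>. \<forall>x. w x \<le> C * (1 + norm x) powr \<gamma>"
    and "RH (p_plus p) w"
  shows "\<exists>c1>0. \<exists>c2>0. \<forall>a l. l > 0 \<longrightarrow>
    (let Q = cube a l;
         E = (if l > 1
              then (LINT x:Q|lebesgue. w x powr p_minus p) powr (1 / p_minus p)
              else (LINT x:Q|lebesgue. w x powr ess_inf_on p Q) powr (1 / ess_inf_on p Q))
     in c1 * E \<le> weighted_norm p w (indicator Q) \<and> weighted_norm p w (indicator Q) \<le> c2 * E)"
proof -
  have pm: "p \<in> borel_measurable lebesgue" and lh0: "LH0 p" using assms(1) unfolding P_log_def by auto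
  define q0 where "q0 = p_minus p"
  obtain Ci where Ci: "Ci > 0" "\<And>x. \<bar>p x - q0\<bar> \<le> Ci / ln (exp 1 + norm x)" "\<And>x. \<bar>p x - q0\<bar> \<le> Ci"
    using LHinf_bound[OF assms(3)] unfolding q0_def by blast
  obtain C0 where C0: "C0 > 0" "\<And>x y. 0 < norm (x - y) \<Longrightarrow> norm (x - y) \<le> 1/2 \<Longrightarrow>
      \<bar>p x - p y\<bar> \<le> C0 / (- ln (norm (x - y)))"
    using lh0 unfolding LH0_def by blast
  have cont: "continuous_on UNIV p" by (rule LH0_cont[OF lh0])
  define s where "s = p_plus p"
  have pge: "q0 \<le> p x" for x unfolding q0_def by (rule pminus_le[OF cont Ci(3)])
  have ple: "p x \<le> s" for x unfolding s_def by (rule pplus_ge[OF cont Ci(3)])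
  have q0: "1 < q0" using assms(2) unfolding q0_def .
  have q0s: "q0 \<le> s" using pge[of 0] ple[of 0] by linarith
  obtain CR where CR: "CR > 0" and RHc: "\<And>a l. l > 0 \<Longrightarrow>
      set_integrable lebesgue (cube a l) (\<lambda>x. w x powr s) \<and>
      ((LINT x:cube a l|lebesgue. w x powr s) / measure lebesgue (cube a l)) powr (1/s)
        \<le> CR * ((LINT x:cube a l|lebesgue. w x) / measure lebesgue (cube a l))"
    using assms(6) unfolding RH_def s_def by blast
  have wint: "\<And>K. compact K \<Longrightarrow> set_integrable lebesgue K w" and wpos: "AE x in lebesgue. 0 < w x"
    using assms(4) unfolding weight_def by auto
  define n where "n = real DIM('a)"
  have n1: "1 \<le> n" unfolding n_def by (simp add: DIM_positive Suc_le_eq)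
  define s' where "s' = s / (s - 1)"
  define K where "K = exp (n / s' * Ci / (q0 - 1)^2)"
  define Dbig where "Dbig = K + 2 ^ DIM('a)"
  define H where "H = C0 + 2 * Ci * ln (2 * n)"
  define Bm where "Bm = max 1 (exp (n * H))"
  define c1 where "c1 = 1 / (2 * CR * (1 + Dbig))"
  define c2 where "c2 = max 1 (Bm * (1 + (2 * CR) powr s))"
  have K1: "1 \<le> K" unfolding K_def using Ci n1 q0 q0s unfolding s'_def by (simp add: zero_le_mult_iff)
  have Dbig1: "1 \<le> Dbig"
  proof -
    have "(0::real) \<le> 2 ^ DIM('a)" by simp
    thus ?thesis unfolding Dbig_def using K1 by linarith
  qed
  have Dbig0: "0 \<le> Dbig" using Dbig1 by simp
  have c1pos: "0 < c1" unfolding c1_def using CR Dbig0 by simp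
  have c2pos: "0 < c2" unfolding c2_def by simp
  have key: "c1 * (LINT x|lebesgue. indicator (cube a l) x * w x powr q) powr (1/q) \<le> weighted_norm p w (indicator (cube a l))
      \<and> weighted_norm p w (indicator (cube a l)) \<le> c2 * (LINT x|lebesgue. indicator (cube a l) x * w x powr q) powr (1/q)"
    if l: "0 < l" and qdef: "q = (if l > 1 then q0 else ess_inf_on p (cube a l))" for a l q
  proof -
    define Q where "Q = cube a l"
    note cf = cube_facts[OF l, of a, folded Q_def]
    define V where "V = measure lebesgue Q"
    have Vl: "V = l ^ DIM('a)" unfolding V_def using cf by simp
    have V0: "0 < V" unfolding Vl using l by simp
    have iw: "integrable lebesgue (\<lambda>x. indicator Q x * w x)"
      using wint[OF cf(5)] unfolding set_integrable_def by simp
    have iws: "integrable lebesgue (\<lambda>x. indicator Q x * w x powr s)"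
      using RHc[OF l, of a] unfolding set_integrable_def Q_def by simp
    have RHQ: "((LINT x|lebesgue. indicator Q x * w x powr s) / measure lebesgue Q) powr (1/s)
              \<le> CR * ((LINT x|lebesgue. indicator Q x * w x) / measure lebesgue Q)"
      using RHc[OF l, of a] unfolding set_lebesgue_integral_def Q_def by simp
    have gen: "1 / (2 * CR * (1 + Dbig)) * (LINT x|lebesgue. indicator Q x * w x powr q) powr (1/q) \<le> weighted_norm p w (indicator Q)
      \<and> weighted_norm p w (indicator Q) \<le> max 1 (Bm * (1 + (2 * CR) powr s)) * (LINT x|lebesgue. indicator Q x * w x powr q) powr (1/q)"
      if q1: "1 < q" and qs: "q \<le> s" and pQ: "\<And>x. x \<in> Q \<Longrightarrow> q \<le> p x \<and> p x \<le> s"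
        and hB: "\<And>x. x \<in> Q \<Longrightarrow> V powr (- (p x - q) / q) \<le> Bm"
        and hD: "(\<integral>\<^sup>+x. ennreal (indicator Q x * (V powr (- (q - 1) / q)) powr (p x / (p x - 1))) \<partial>lebesgue) \<le> ennreal Dbig"
    proof (rule cube_est[OF pm cf(1) cf(3) _ iw iws wpos RHQ CR q1 qs pQ])
      show "0 < measure lebesgue Q" using V0 unfolding V_def .
      show "\<And>x. x \<in> Q \<Longrightarrow> measure lebesgue Q powr (- (p x - q) / q) \<le> Bm" using hB unfolding V_def .
      show "(\<integral>\<^sup>+x. ennreal (indicator Q x * (measure lebesgue Q powr (- (q - 1) / q)) powr (p x / (p x - 1))) \<partial>lebesgue) \<le> ennreal Dbig"
        using hD unfolding V_def .
      show "0 \<le> Dbig" by (rule Dbig0)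
    qed
    have res: "1 / (2 * CR * (1 + Dbig)) * (LINT x|lebesgue. indicator Q x * w x powr q) powr (1/q) \<le> weighted_norm p w (indicator Q)
      \<and> weighted_norm p w (indicator Q) \<le> max 1 (Bm * (1 + (2 * CR) powr s)) * (LINT x|lebesgue. indicator Q x * w x powr q) powr (1/q)"
    proof (cases "l > 1")
      case True
      hence qq: "q = q0" using qdef by simp
      have V1: "1 \<le> V" unfolding Vl using True by simp
      show ?thesis
      proof (rule gen)
        show "1 < q" "q \<le> s" using q0 q0s qq by auto
        show "\<And>x. x \<in> Q \<Longrightarrow> q \<le> p x \<and> p x \<le> s" using pge ple qq by auto
        show "V powr (- (p x - q) / q) \<le> Bm" if "x \<in> Q" for x
        proof -
          have "- (p x - q) / q \<le> 0" using pge[of x] q0 qq by (simp add: divide_nonpos_pos)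
          hence "V powr (- (p x - q) / q) \<le> V powr 0" using V1 by (intro powr_mono) auto
          thus ?thesis using V0 unfolding Bm_def by simp
        qed
        define \<beta> where "\<beta> = V powr (- (q0 - 1) / q0)"
        have \<beta>0: "0 < \<beta>" unfolding \<beta>_def using V0 by simp
        have \<beta>1: "\<beta> \<le> 1"
        proof -
          have "- (q0 - 1) / q0 \<le> 0" using q0 by (simp add: divide_nonpos_pos)
          hence "\<beta> \<le> V powr 0" unfolding \<beta>_def using V1 by (intro powr_mono) auto
          thus ?thesis using V0 by simp
        qed
        define \<rho> where "\<rho> = exp (- ln \<beta> * s' / n)"
        have \<rho>0: "0 < \<rho>" unfolding \<rho>_def by simp
        define Cb where "Cb = cbox (- \<rho> *\<^sub>R One) (\<rho> *\<^sub>R One :: 'a)"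
        have Cbs: "Cb \<in> sets lebesgue" unfolding Cb_def by simp
        have n0: "0 < n" using n1 by simp
        have pt: "ennreal (indicator Q x * \<beta> powr (p x / (p x - 1)))
            \<le> ennreal (K * \<beta> powr (q0 / (q0 - 1))) * indicator Q x + ennreal (\<beta> powr s') * indicator Cb x" for x
        proof (cases "x \<in> Q")
          case False thus ?thesis by simp
        next
          case True
          define lx where "lx = ln (exp 1 + norm x)"
          have lx1: "1 \<le> lx" unfolding lx_def by (subst ln_ge_iff) (auto simp: add_pos_nonneg)
          have lx0: "0 < lx" using lx1 by simp
          have pl: "(p x - q0) * lx \<le> Ci"
          proof -
            have "p x - q0 \<le> Ci / lx" using Ci(2)[of x] unfolding lx_def by simp
            hence "(p x - q0) * lx \<le> Ci / lx * lx" using lx0 by (intro mult_right_mono) auto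
            thus ?thesis using lx0 by simp
          qed
          have bp: "\<beta> powr (p x / (p x - 1)) \<le> K * \<beta> powr (q0 / (q0 - 1))
              + (if n / s' * lx < - ln \<beta> then \<beta> powr s' else 0)"
            using big_pt[OF \<beta>0 \<beta>1 q0 pge[of x] ple[of x] lx0 pl n0] unfolding K_def s'_def by simp
          have "(if n / s' * lx < - ln \<beta> then \<beta> powr s' else 0) \<le> \<beta> powr s' * indicator Cb x"
          proof (cases "n / s' * lx < - ln \<beta>")
            case True
            have s'0: "0 < s'" unfolding s'_def using q0 q0s by simp
            have "lx < - ln \<beta> * s' / n" using True n0 s'0 by (simp add: field_simps)
            hence "exp lx < \<rho>" unfolding \<rho>_def by simp
            hence nx: "norm x < \<rho>" unfolding lx_def by (smt (verit) exp_gt_zero exp_ln add_pos_nonneg norm_ge_zero)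
            have "x \<in> Cb" unfolding Cb_def mem_box
            proof
              fix b :: 'a assume b: "b \<in> Basis"
              have "\<bar>x \<bullet> b\<bar> \<le> norm x" by (rule Basis_le_norm[OF b])
              thus "(- \<rho> *\<^sub>R One) \<bullet> b \<le> x \<bullet> b \<and> x \<bullet> b \<le> (\<rho> *\<^sub>R One) \<bullet> b"
                using nx b by (simp add: abs_le_iff)
            qed
            thus ?thesis using True by simp
          next
            case False thus ?thesis by simp
          qed
          hence "\<beta> powr (p x / (p x - 1)) \<le> K * \<beta> powr (q0 / (q0 - 1)) + \<beta> powr s' * indicator Cb x"
            using bp by linarith
          hence "ennreal (\<beta> powr (p x / (p x - 1))) \<le> ennreal (K * \<beta> powr (q0 / (q0 - 1)) + \<beta> powr s' * indicator Cb x)"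
            by (rule ennreal_leI)
          also have "\<dots> = ennreal (K * \<beta> powr (q0 / (q0 - 1))) + ennreal (\<beta> powr s') * indicator Cb x"
            using K1 by (simp add: ennreal_plus ennreal_mult' indicator_def)
          finally show ?thesis using True by simp
        qed
        have "(\<integral>\<^sup>+x. ennreal (indicator Q x * \<beta> powr (p x / (p x - 1))) \<partial>lebesgue)
            \<le> (\<integral>\<^sup>+x. ennreal (K * \<beta> powr (q0 / (q0 - 1))) * indicator Q x + ennreal (\<beta> powr s') * indicator Cb x \<partial>lebesgue)"
          by (intro nn_integral_mono pt)
        also have "\<dots> = ennreal (K * \<beta> powr (q0 / (q0 - 1))) * emeasure lebesgue Q + ennreal (\<beta> powr s') * emeasure lebesgue Cb"
          using cf(1) Cbs by (simp add: nn_integral_add nn_integral_cmult_indicator)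
        also have "\<dots> = ennreal (K * (\<beta> powr (q0 / (q0 - 1)) * V) + \<beta> powr s' * (2 * \<rho>) ^ DIM('a))"
        proof -
          have Cbm: "emeasure lebesgue Cb = ennreal ((2 * \<rho>) ^ DIM('a))"
            unfolding Cb_def by (rule sym_box_measure[OF \<rho>0])
          have e1: "ennreal (K * \<beta> powr (q0 / (q0 - 1))) * emeasure lebesgue Q = ennreal (K * (\<beta> powr (q0 / (q0 - 1)) * V))"
            unfolding cf(2) Vl[symmetric] using K1 V0 by (simp add: ennreal_mult[symmetric] mult.assoc)
          have e2: "ennreal (\<beta> powr s') * emeasure lebesgue Cb = ennreal (\<beta> powr s' * (2 * \<rho>) ^ DIM('a))"
            unfolding Cbm using \<rho>0 by (simp add: ennreal_mult[symmetric])
          show ?thesis unfolding e1 e2 using K1 V0 \<rho>0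
            by (subst ennreal_plus[symmetric]) auto
        qed
        also have "\<beta> powr (q0 / (q0 - 1)) * V = 1"
        proof -
          have "\<beta> powr (q0 / (q0 - 1)) = V powr (- 1)"
            unfolding \<beta>_def powr_powr using q0 by (intro arg_cong[where f="(powr) V"]) (simp add: field_simps)
          thus ?thesis using V0 by (simp add: powr_minus)
        qed
        also have "\<beta> powr s' * (2 * \<rho>) ^ DIM('a) = 2 ^ DIM('a)"
        proof -
          have "\<rho> ^ DIM('a) = exp (real DIM('a) * (- ln \<beta> * s' / n))" unfolding \<rho>_def by (rule exp_of_nat_mult[symmetric])
          also have "real DIM('a) * (- ln \<beta> * s' / n) = - ln \<beta> * s'" using n0 unfolding n_def by simp
          finally have "\<rho> ^ DIM('a) = exp (- ln \<beta> * s')" .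
          moreover have "\<beta> powr s' = exp (s' * ln \<beta>)" using \<beta>0 by (simp add: powr_def)
          ultimately have "\<beta> powr s' * \<rho> ^ DIM('a) = 1" by (simp add: exp_add[symmetric])
          thus ?thesis by (simp add: power_mult_distrib)
        qed
        finally show "(\<integral>\<^sup>+x. ennreal (indicator Q x * (V powr (- (q - 1) / q)) powr (p x / (p x - 1))) \<partial>lebesgue) \<le> ennreal Dbig"
          unfolding Dbig_def qq \<beta>_def[symmetric] by simp
      qed
    next
      case False
      hence l1: "l \<le> 1" by simp
      obtain y where y: "y \<in> Q" "ess_inf_on p Q = p y" "\<And>x. x \<in> Q \<Longrightarrow> p y \<le> p x"
        using ess_inf_cube[OF cont l, of a] unfolding Q_def by blast
      have qq: "q = p y" using qdef False y(2) unfolding Q_def by simp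
      have V1: "V \<le> 1" unfolding Vl using l l1 by (simp add: power_le_one)
      show ?thesis
      proof (rule gen)
        show q1: "1 < q" "q \<le> s" using pge[of y] ple[of y] q0 qq by auto
        show "\<And>x. x \<in> Q \<Longrightarrow> q \<le> p x \<and> p x \<le> s" using y(3) ple qq by auto
        show "V powr (- (p x - q) / q) \<le> Bm" if x: "x \<in> Q" for x
        proof -
          define d where "d = norm (x - y)"
          define dp where "dp = p x - q"
          have dp0: "0 \<le> dp" unfolding dp_def qq using y(3)[OF x] by simp
          have dp2: "dp \<le> 2 * Ci" unfolding dp_def qq using Ci(3)[of x] Ci(3)[of y] by (simp add: abs_le_iff)
          have dd: "d \<le> n * l" unfolding d_def n_def using cube_diam[OF x[unfolded Q_def] y(1)[unfolded Q_def]] .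
          have lhd: "dp \<le> C0 / (- ln d)" if "0 < d" "d \<le> 1/2"
            using C0(2)[of x y] that unfolding d_def dp_def qq by (simp add: abs_le_iff)
          have d0: "dp = 0" if "d = 0"
            using that unfolding d_def dp_def qq by simp
          have Hb: "dp * (- ln l) \<le> H"
            unfolding H_def by (rule small_H[OF l l1 _ dd n1 dp0 dp2 C0(1) lhd d0]) (simp add: d_def)
          have ll: "0 \<le> - ln l" using l l1 by simp
          have X0: "0 \<le> dp * (- ln l)" using dp0 ll by (rule mult_nonneg_nonneg)
          have "V powr (- dp / q) = exp (- dp / q * (n * ln l))"
            using V0 l unfolding Vl n_def by (simp add: powr_def ln_realpow)
          also have "- dp / q * (n * ln l) = n * (dp * (- ln l)) / q" by (simp add: field_simps)
          also have "n * (dp * (- ln l)) / q \<le> n * (dp * (- ln l))"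
          proof -
            have Y0: "0 \<le> n * (dp * (- ln l))" by (rule mult_nonneg_nonneg[OF _ X0]) (use n1 in simp)
            have "n * (dp * (- ln l)) / q \<le> n * (dp * (- ln l)) / 1"
              using Y0 q1 by (intro divide_left_mono) auto
            thus ?thesis by simp
          qed
          also have "\<dots> \<le> n * H" using Hb n1 by (intro mult_left_mono) auto
          finally have "V powr (- dp / q) \<le> exp (n * H)" by simp
          thus ?thesis unfolding Bm_def dp_def by simp
        qed
        define \<beta> where "\<beta> = V powr (- (q - 1) / q)"
        have \<beta>1: "1 \<le> \<beta>"
        proof -
          have "- (q - 1) / q \<le> 0" using q1 by (simp add: divide_nonpos_pos)
          hence "V powr 0 \<le> \<beta>" unfolding \<beta>_def using V1 V0 by (intro powr_mono') auto
          thus ?thesis using V0 by simp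
        qed
        have pt: "ennreal (indicator Q x * \<beta> powr (p x / (p x - 1))) \<le> ennreal (\<beta> powr (q / (q - 1))) * indicator Q x" for x
        proof (cases "x \<in> Q")
          case False thus ?thesis by simp
        next
          case True
          have pq: "q \<le> p x" using y(3)[OF True] qq by simp
          have "p x / (p x - 1) \<le> q / (q - 1)" using pq q1 by (simp add: field_simps)
          hence "\<beta> powr (p x / (p x - 1)) \<le> \<beta> powr (q / (q - 1))" using \<beta>1 by (intro powr_mono) auto
          thus ?thesis using True by (simp add: ennreal_leI)
        qed
        have "(\<integral>\<^sup>+x. ennreal (indicator Q x * \<beta> powr (p x / (p x - 1))) \<partial>lebesgue)
            \<le> (\<integral>\<^sup>+x. ennreal (\<beta> powr (q / (q - 1))) * indicator Q x \<partial>lebesgue)"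
          by (intro nn_integral_mono pt)
        also have "\<dots> = ennreal (\<beta> powr (q / (q - 1))) * emeasure lebesgue Q"
          using cf(1) by (simp add: nn_integral_cmult_indicator)
        also have "\<dots> = ennreal (\<beta> powr (q / (q - 1)) * V)"
          using cf(2) unfolding Vl[symmetric] by (simp add: ennreal_mult')
        also have "\<beta> powr (q / (q - 1)) * V = 1"
        proof -
          have "\<beta> powr (q / (q - 1)) = V powr (- 1)"
            unfolding \<beta>_def powr_powr using q1 by (intro arg_cong[where f="(powr) V"]) (simp add: field_simps)
          thus ?thesis using V0 by (simp add: powr_minus)
        qed
        also have "ennreal 1 \<le> ennreal Dbig" using Dbig1 by (intro ennreal_leI)
        finally show "(\<integral>\<^sup>+x. ennreal (indicator Q x * (V powr (- (q - 1) / q)) powr (p x / (p x - 1))) \<partial>lebesgue) \<le> ennreal Dbig"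
          unfolding \<beta>_def .
      qed
    qed
    thus ?thesis unfolding Q_def c1_def c2_def by simp
  qed
  have main: "\<forall>a l. l > 0 \<longrightarrow>
    (let Q = cube a l;
         E = (if l > 1
              then (LINT x:Q|lebesgue. w x powr p_minus p) powr (1 / p_minus p)
              else (LINT x:Q|lebesgue. w x powr ess_inf_on p Q) powr (1 / ess_inf_on p Q))
     in c1 * E \<le> weighted_norm p w (indicator Q) \<and> weighted_norm p w (indicator Q) \<le> c2 * E)"
  proof (intro allI impI)
    fix a :: 'a and l :: real
    assume l: "0 < l"
    show "let Q = cube a l;
         E = (if l > 1
              then (LINT x:Q|lebesgue. w x powr p_minus p) powr (1 / p_minus p)
              else (LINT x:Q|lebesgue. w x powr ess_inf_on p Q) powr (1 / ess_inf_on p Q))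
     in c1 * E \<le> weighted_norm p w (indicator Q) \<and> weighted_norm p w (indicator Q) \<le> c2 * E"
    proof (cases "l > 1")
      case True
      from key[OF l, of q0 a] True show ?thesis unfolding Let_def q0_def set_lebesgue_integral_def by simp
    next
      case False
      from key[OF l, of "ess_inf_on p (cube a l)" a] False show ?thesis
        unfolding Let_def set_lebesgue_integral_def by simp
    qed
  qed
  show ?thesis using c1pos c2pos main by blast
qed


end
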